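(* Let $0\le k\le n$. The $\mathbb{Z}$-submodule of $\mathbb{Z}[x,y]$ spanned by the Tutte polynomials of all binary matroids of rank $k$ on $n$ elements has rank $k(n-k)+1$, and the same holds for the $\mathbb{Z}$-submodule spanned by the Tutte polynomials of all graphic matroids of rank $k$ on $n$ elements.
   Context: The Tutte polynomial of a matroid $\mathsf{M}$ is $T_{\mathsf{M}}(x,y)\in\mathbb{Z}[x,y]$; the rank of a $\mathbb{Z}$-module is its torsion-free rank. *)

theory Defs
  imports "HOL-Computational_Algebra.Polynomial"
begin

text \<open>Bivariate integer polynomials Z[x,y] are represented as int poly poly,
  i.e. (Z[x])[y]: the outer variable is y, the coefficients are polynomials in x.\<close>

definition varX :: "int poly poly" where "varX = [:[:0, 1:]:]"
definition varY :: "int poly poly" where "varY = [:0, 1:]"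

definition mrank :: "(nat set \<Rightarrow> bool) \<Rightarrow> nat set \<Rightarrow> nat" where
  "mrank I A = Max (card ` {B. B \<subseteq> A \<and> I B})"

definition tutte :: "(nat set \<Rightarrow> bool) \<Rightarrow> nat set \<Rightarrow> int poly poly" where
  "tutte I E = (\<Sum>A\<in>Pow E. (varX - 1) ^ (mrank I E - mrank I A) * (varY - 1) ^ (card A - mrank I A))"

text \<open>Binary matroids: element e is represented by a vector v e over GF(2), encoded as
  the set of coordinates (in nat) where it is 1. A set A is independent iff no nonempty
  subset of the vectors sums to zero over GF(2).\<close>

definition bin_indep :: "(nat \<Rightarrow> nat set) \<Rightarrow> nat set \<Rightarrow> bool" where
  "bin_indep v A \<longleftrightarrow> (\<forall>B\<subseteq>A. B \<noteq> {} \<longrightarrow> {i. odd (card {e\<in>B. i \<in> v e})} \<noteq> {})"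

text \<open>Graphic matroids: a multigraph (loops and parallel edges allowed) with edge e
  joining vertices fst (G e) and snd (G e). A set of edges is independent iff it is a
  forest, i.e. no edge e of A has its endpoints connected by a path in A - {e}
  (in particular, loops are dependent).\<close>

definition adj :: "(nat \<Rightarrow> nat \<times> nat) \<Rightarrow> nat set \<Rightarrow> nat \<Rightarrow> nat \<Rightarrow> bool" where
  "adj G A x y \<longleftrightarrow> (\<exists>e\<in>A. (fst (G e) = x \<and> snd (G e) = y) \<or> (snd (G e) = x \<and> fst (G e) = y))"

definition graph_indep :: "(nat \<Rightarrow> nat \<times> nat) \<Rightarrow> nat set \<Rightarrow> bool" where
  "graph_indep G A \<longleftrightarrow> (\<forall>e\<in>A. \<not> (adj G (A - {e}))\<^sup>*\<^sup>* (fst (G e)) (snd (G e)))"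

text \<open>Tutte polynomials of all binary / graphic matroids of rank k on n elements
  (ground set {0..<n}; every such matroid is isomorphic to one on this ground set).\<close>

definition binary_tutte_polys :: "nat \<Rightarrow> nat \<Rightarrow> int poly poly set" where
  "binary_tutte_polys n k =
     {tutte (bin_indep v) {..<n} | v. mrank (bin_indep v) {..<n} = k}"

definition graphic_tutte_polys :: "nat \<Rightarrow> nat \<Rightarrow> int poly poly set" where
  "graphic_tutte_polys n k =
     {tutte (graph_indep G) {..<n} | G. mrank (graph_indep G) {..<n} = k}"

definition zspan :: "int poly poly set \<Rightarrow> int poly poly set" where
  "zspan S = {(\<Sum>p\<in>T. of_int (c p) * p) | T c. finite T \<and> T \<subseteq> S}"

definition zindep :: "int poly poly set \<Rightarrow> bool" where
  "zindep T \<longleftrightarrow> finite T \<and>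
     (\<forall>c :: int poly poly \<Rightarrow> int. (\<Sum>p\<in>T. of_int (c p) * p) = 0 \<longrightarrow> (\<forall>p\<in>T. c p = 0))"

definition zrank :: "int poly poly set \<Rightarrow> nat" where
  "zrank M = (GREATEST r. \<exists>T. T \<subseteq> M \<and> zindep T \<and> card T = r)"

end

theory Submission
  imports Defs
begin

lemma int_elim:
  fixes w :: "'a \<Rightarrow> 'b \<Rightarrow> int"
  assumes "finite D" "finite S" "card D < card S"
  shows "\<exists>c. (\<exists>i\<in>S. c i \<noteq> 0) \<and> (\<forall>t\<in>D. (\<Sum>i\<in>S. c i * w i t) = 0)"
  using assms
proof (induction D arbitrary: S w rule: finite_induct)
  case empty
  then obtain i where "i \<in> S" by (metis card.empty card_gt_0_iff ex_in_conv)
  then show ?case by (intro exI[of _ "\<lambda>_. 1"]) auto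
next
  case (insert t0 D S w)
  show ?case
  proof (cases "\<forall>i\<in>S. w i t0 = 0")
    case True
    have "card D < card S" using insert by simp
    from insert.IH[OF insert.prems(1) this, of w] obtain c where
      c: "\<exists>i\<in>S. c i \<noteq> 0" "\<forall>t\<in>D. (\<Sum>i\<in>S. c i * w i t) = 0" by auto
    then show ?thesis using True by (intro exI[of _ c]) auto
  next
    case False
    then obtain j where j: "j \<in> S" "w j t0 \<noteq> 0" by auto
    define \<alpha> where "\<alpha> = w j t0"
    define w' where "w' i t = \<alpha> * w i t - w i t0 * w j t" for i t
    have "card D < card (S - {j})" using insert j by auto
    from insert.IH[OF _ this, of w'] insert.prems obtain c where
      c: "\<exists>i\<in>S-{j}. c i \<noteq> 0" "\<forall>t\<in>D. (\<Sum>i\<in>S-{j}. c i * w' i t) = 0" by auto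
    define c' where "c' i = (if i = j then - (\<Sum>i\<in>S-{j}. c i * w i t0) else \<alpha> * c i)" for i
    have key: "(\<Sum>i\<in>S. c' i * w i t) = (\<Sum>i\<in>S-{j}. c i * w' i t)" for t
    proof -
      have "(\<Sum>i\<in>S. c' i * w i t) = c' j * w j t + (\<Sum>i\<in>S-{j}. c' i * w i t)"
        using j insert.prems by (simp add: sum.remove)
      also have "(\<Sum>i\<in>S-{j}. c' i * w i t) = (\<Sum>i\<in>S-{j}. \<alpha> * c i * w i t)"
        by (rule sum.cong) (auto simp: c'_def)
      finally show ?thesis
        by (simp add: c'_def w'_def sum_subtractf sum_distrib_left sum_distrib_right algebra_simps)
    qed
    have t0: "(\<Sum>i\<in>S-{j}. c i * w' i t0) = 0"
      by (simp add: w'_def \<alpha>_def)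
    from c(1) obtain i where i: "i \<in> S - {j}" "c i \<noteq> 0" by auto
    have "c' i \<noteq> 0" using i j by (simp add: c'_def \<alpha>_def)
    then show ?thesis using i key c(2) t0 by (intro exI[of _ c']) auto
  qed
qed

definition Xm :: "int poly poly" where "Xm = varX - 1"
definition Ym :: "int poly poly" where "Ym = varY - 1"

definition hered :: "(nat set \<Rightarrow> bool) \<Rightarrow> bool" where
  "hered I \<longleftrightarrow> I {} \<and> (\<forall>B C. I B \<longrightarrow> C \<subseteq> B \<longrightarrow> I C)"

lemma mrank_fin: "finite A \<Longrightarrow> finite (card ` {B. B \<subseteq> A \<and> I B})"
  by (rule finite_imageI) (rule finite_subset[of _ "Pow A"], auto)

lemma mrank_obtain:
  assumes "finite A" "I {}"
  shows "\<exists>B\<subseteq>A. I B \<and> card B = mrank I A"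
proof -
  have "mrank I A \<in> card ` {B. B \<subseteq> A \<and> I B}"
    unfolding mrank_def using assms mrank_fin[OF assms(1), of I] by (intro Max_in) auto
  then show ?thesis by auto
qed

lemma mrank_ge:
  assumes "finite A" "B \<subseteq> A" "I B"
  shows "card B \<le> mrank I A"
  unfolding mrank_def using assms mrank_fin[OF assms(1), of I] by (intro Max_ge) auto

lemma mrank_le_card:
  assumes "finite A" "I {}"
  shows "mrank I A \<le> card A"
  using mrank_obtain[of A I, OF assms] assms(1) by (metis card_mono)

lemma mrank_mono:
  assumes "finite A" "I {}" "C \<subseteq> A"
  shows "mrank I C \<le> mrank I A"
proof -
  obtain B where "B \<subseteq> C" "I B" "card B = mrank I C"
    using mrank_obtain[of C I, OF finite_subset[OF assms(3) assms(1)] assms(2)] by blast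
  then show ?thesis using mrank_ge[OF assms(1), of B I] assms(3) by auto
qed

lemma mrank_nullity:
  assumes "finite E" "A \<subseteq> E" "hered I"
  shows "mrank I E \<le> mrank I A + card (E - A)"
proof -
  have I0: "I {}" using assms(3) by (simp add: hered_def)
  obtain B where B: "B \<subseteq> E" "I B" "card B = mrank I E"
    using mrank_obtain[of E I, OF assms(1) I0] by blast
  have fB: "finite B" using B(1) assms(1) finite_subset by blast
  have "card B \<le> card (B \<inter> A) + card (B - A)"
    by (metis Int_Diff_Un card_Un_le)
  moreover have "card (B \<inter> A) \<le> mrank I A"
    using mrank_ge[OF finite_subset[OF assms(2) assms(1)], of "B \<inter> A" I] B(2) assms(3)
    unfolding hered_def by auto
  moreover have "card (B - A) \<le> card (E - A)"
    using B(1) assms(1) by (intro card_mono) auto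
  ultimately show ?thesis using B(3) by linarith
qed

definition gen0 :: "nat \<Rightarrow> nat set \<Rightarrow> int poly poly" where
  "gen0 k E = (\<Sum>A\<in>Pow E. Xm ^ (k - card A) * Ym ^ (card A - k))"
definition hgen :: "nat \<times> nat \<Rightarrow> int poly poly" where
  "hgen t = Xm ^ fst t * Ym ^ snd t - Xm ^ (fst t - snd t) * Ym ^ (snd t - fst t)"
definition Dset :: "nat \<Rightarrow> nat \<Rightarrow> (nat \<times> nat) set" where
  "Dset k m = insert (0,0) ({1..k} \<times> {1..m})"
definition gen :: "nat \<Rightarrow> nat set \<Rightarrow> nat \<times> nat \<Rightarrow> int poly poly" where
  "gen k E t = (if t = (0,0) then gen0 k E else hgen t)"
definition repr :: "nat \<Rightarrow> nat set \<Rightarrow> int poly poly \<Rightarrow> bool" where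
  "repr k E p \<longleftrightarrow> (\<exists>z. p = (\<Sum>t\<in>Dset k (card E - k). of_int (z t) * gen k E t))"

lemma card_Dset: "card (Dset k m) = k * m + 1"
  unfolding Dset_def by (subst card_insert_disjoint) (auto simp: card_cartesian_product)

lemma finite_Dset: "finite (Dset k m)"
  unfolding Dset_def by auto

lemma tutte_alt: "tutte I E = (\<Sum>A\<in>Pow E. Xm ^ (mrank I E - mrank I A) * Ym ^ (card A - mrank I A))"
  by (simp add: tutte_def Xm_def Ym_def)

lemma hgen_zero: "fst t = 0 \<or> snd t = 0 \<Longrightarrow> hgen t = 0"
  by (cases t) (auto simp: hgen_def)

lemma tutte_repr:
  assumes fin: "finite E" and h: "hered I" and rk: "mrank I E = k"
  shows "repr k E (tutte I E)"
proof -
  have I0: "I {}" using h by (simp add: hered_def)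
  define m where "m = card E - k"
  define D' where "D' = {1..k} \<times> {1..m}"
  define ij where "ij A = (k - mrank I A, card A - mrank I A)" for A
  have bounds: "fst (ij A) \<le> k \<and> snd (ij A) \<le> m" if "A \<subseteq> E" for A
  proof -
    have "mrank I A \<le> card A" using mrank_le_card[of A I] I0 fin that finite_subset by blast
    moreover have "mrank I A \<le> k" using mrank_mono[of E I A, OF fin I0 that] rk by simp
    moreover have "k \<le> mrank I A + card (E - A)" using mrank_nullity[OF fin that h] rk by simp
    moreover have "card E = card A + card (E - A)"
      using fin that by (metis card_Diff_subset finite_subset le_add_diff_inverse card_mono)
    ultimately show ?thesis by (simp add: ij_def m_def)
  qed
  have trm: "Xm ^ (k - mrank I A) * Ym ^ (card A - mrank I A)
      = Xm ^ (k - card A) * Ym ^ (card A - k) + hgen (ij A)" if "A \<subseteq> E" for A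
  proof -
    have "mrank I A \<le> card A" using mrank_le_card[of A I] I0 fin that finite_subset by blast
    moreover have "mrank I A \<le> k" using mrank_mono[of E I A, OF fin I0 that] rk by simp
    ultimately have "k - mrank I A - (card A - mrank I A) = k - card A"
      "card A - mrank I A - (k - mrank I A) = card A - k" by auto
    then show ?thesis by (simp add: hgen_def ij_def)
  qed
  have hsum: "hgen (ij A) = (\<Sum>t\<in>D'. if ij A = t then hgen t else 0)" if "A \<subseteq> E" for A
  proof (cases "ij A \<in> D'")
    case True
    then show ?thesis by (simp add: sum.delta[OF finite_subset[of D' D'], simplified] D'_def)
  next
    case False
    then have "fst (ij A) = 0 \<or> snd (ij A) = 0" using bounds[OF that] unfolding D'_def
      by (cases "ij A") auto
    then have "hgen (ij A) = 0" by (rule hgen_zero)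
    moreover have "(\<Sum>t\<in>D'. if ij A = t then hgen t else 0) = 0"
      using False by (intro sum.neutral) auto
    ultimately show ?thesis by simp
  qed
  have "tutte I E = (\<Sum>A\<in>Pow E. Xm ^ (k - card A) * Ym ^ (card A - k) + hgen (ij A))"
    unfolding tutte_alt rk by (rule sum.cong) (auto simp: trm)
  also have "\<dots> = gen0 k E + (\<Sum>A\<in>Pow E. hgen (ij A))"
    by (simp add: sum.distrib gen0_def)
  also have "(\<Sum>A\<in>Pow E. hgen (ij A)) = (\<Sum>A\<in>Pow E. \<Sum>t\<in>D'. if ij A = t then hgen t else 0)"
    by (rule sum.cong) (auto simp: hsum)
  also have "\<dots> = (\<Sum>t\<in>D'. \<Sum>A\<in>Pow E. if ij A = t then hgen t else 0)"
    by (rule sum.swap)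
  also have "\<dots> = (\<Sum>t\<in>D'. of_int (int (card {A\<in>Pow E. ij A = t})) * hgen t)"
  proof (rule sum.cong)
    fix t assume "t \<in> D'"
    have "(\<Sum>A\<in>Pow E. if ij A = t then hgen t else 0) = (\<Sum>A\<in>{A\<in>Pow E. ij A = t}. hgen t)"
      using fin by (intro sum.inter_filter[symmetric]) simp
    also have "\<dots> = of_nat (card {A\<in>Pow E. ij A = t}) * hgen t" by simp
    finally show "(\<Sum>A\<in>Pow E. if ij A = t then hgen t else 0) = of_int (int (card {A\<in>Pow E. ij A = t})) * hgen t"
      by simp
  qed simp
  finally have eq: "tutte I E = gen0 k E + (\<Sum>t\<in>D'. of_int (int (card {A\<in>Pow E. ij A = t})) * hgen t)" .
  define z where "z t = (if t = (0,0) then 1 else int (card {A\<in>Pow E. ij A = t}))" for t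
  have n0: "(0,0) \<notin> D'" by (simp add: D'_def)
  have "(\<Sum>t\<in>Dset k m. of_int (z t) * gen k E t)
      = gen0 k E + (\<Sum>t\<in>D'. of_int (z t) * gen k E t)"
    unfolding Dset_def D'_def[symmetric] using n0 by (simp add: D'_def z_def gen_def)
  also have "(\<Sum>t\<in>D'. of_int (z t) * gen k E t) = (\<Sum>t\<in>D'. of_int (int (card {A\<in>Pow E. ij A = t})) * hgen t)"
    by (rule sum.cong) (use n0 in \<open>auto simp: z_def gen_def\<close>)
  finally show ?thesis unfolding repr_def m_def[symmetric] using eq by metis
qed

lemma repr_comb:
  assumes "finite T" "\<forall>p\<in>T. repr k E p"
  shows "repr k E (\<Sum>p\<in>T. of_int (c p) * p)"
proof -
  let ?D = "Dset k (card E - k)"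
  from assms(2) obtain Z where Z: "\<forall>p\<in>T. p = (\<Sum>t\<in>?D. of_int (Z p t) * gen k E t)"
    unfolding repr_def by metis
  have "(\<Sum>p\<in>T. of_int (c p) * p) = (\<Sum>p\<in>T. of_int (c p) * (\<Sum>t\<in>?D. of_int (Z p t) * gen k E t))"
    using Z by (intro sum.cong) auto
  also have "\<dots> = (\<Sum>t\<in>?D. of_int (\<Sum>p\<in>T. c p * Z p t) * gen k E t)"
    by (simp add: sum_distrib_left sum_distrib_right of_int_sum mult.assoc mult.left_commute)
       (rule sum.swap)
  finally show ?thesis unfolding repr_def by (intro exI[of _ "\<lambda>t. \<Sum>p\<in>T. c p * Z p t"])
qed

lemma zspan_repr:
  assumes "\<forall>p\<in>S. repr k E p" "q \<in> zspan S"
  shows "repr k E q"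
proof -
  from assms(2) obtain T c where "q = (\<Sum>p\<in>T. of_int (c p) * p)" "finite T" "T \<subseteq> S"
    unfolding zspan_def by blast
  then show ?thesis using repr_comb[of T k E c] assms(1) by blast
qed

lemma indep_card:
  assumes "\<forall>q\<in>M. repr k E q" "T \<subseteq> M" "zindep T"
  shows "card T \<le> k * (card E - k) + 1"
proof (rule ccontr)
  let ?D = "Dset k (card E - k)"
  assume "\<not> ?thesis"
  then have lt: "card ?D < card T" by (simp add: card_Dset)
  have fT: "finite T" using assms(3) by (simp add: zindep_def)
  from assms(1,2) obtain Z where Z: "\<forall>p\<in>T. p = (\<Sum>t\<in>?D. of_int (Z p t) * gen k E t)"
    unfolding repr_def by (metis subsetD)
  from int_elim[OF finite_Dset fT lt, of Z] obtain c where
    c: "\<exists>i\<in>T. c i \<noteq> 0" "\<forall>t\<in>?D. (\<Sum>i\<in>T. c i * Z i t) = 0" by blast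
  have "(\<Sum>p\<in>T. of_int (c p) * p) = (\<Sum>p\<in>T. of_int (c p) * (\<Sum>t\<in>?D. of_int (Z p t) * gen k E t))"
    using Z by (intro sum.cong) auto
  also have "\<dots> = (\<Sum>t\<in>?D. of_int (\<Sum>p\<in>T. c p * Z p t) * gen k E t)"
    by (simp add: sum_distrib_left sum_distrib_right of_int_sum mult.assoc mult.left_commute)
       (rule sum.swap)
  also have "\<dots> = 0" using c(2) by simp
  finally have "\<forall>p\<in>T. c p = 0" using assms(3) unfolding zindep_def by blast
  then show False using c(1) by blast
qed

lemma zrank_eq:
  assumes "\<And>T. T \<subseteq> M \<Longrightarrow> zindep T \<Longrightarrow> card T \<le> d"
    and "T0 \<subseteq> M" "zindep T0" "card T0 = d"
  shows "zrank M = d"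
  unfolding zrank_def
  by (rule Greatest_equality) (use assms in auto)

lemma hered_bin: "hered (bin_indep v)"
  unfolding hered_def bin_indep_def by auto

lemma adj_mono: "A \<subseteq> B \<Longrightarrow> adj G A x y \<Longrightarrow> adj G B x y"
  unfolding adj_def by auto

lemma hered_graph: "hered (graph_indep G)"
  unfolding hered_def graph_indep_def
proof (intro conjI allI impI ballI)
  fix B C e assume H: "\<forall>e\<in>B. \<not> (adj G (B - {e}))\<^sup>*\<^sup>* (fst (G e)) (snd (G e))" "C \<subseteq> B" "e \<in> C"
  show "\<not> (adj G (C - {e}))\<^sup>*\<^sup>* (fst (G e)) (snd (G e))"
  proof
    assume "(adj G (C - {e}))\<^sup>*\<^sup>* (fst (G e)) (snd (G e))"
    then have "(adj G (B - {e}))\<^sup>*\<^sup>* (fst (G e)) (snd (G e))"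
      using H(2) by (induction rule: rtranclp_induct)
        (auto intro: rtranclp.rtrancl_into_rtrancl adj_mono[of "C - {e}" "B - {e}"])
    then show False using H by blast
  qed
qed simp

lemma upper_bound:
  assumes "\<forall>p\<in>S. \<exists>I. hered I \<and> mrank I {..<n} = k \<and> p = tutte I {..<n}"
    and "T \<subseteq> zspan S" "zindep T"
  shows "card T \<le> k * (n - k) + 1"
proof -
  have "\<forall>p\<in>S. repr k {..<n} p" using assms(1) tutte_repr[of "{..<n}"] by fastforce
  then have "\<forall>q\<in>zspan S. repr k {..<n} q" using zspan_repr by blast
  from indep_card[OF this assms(2,3)] show ?thesis by simp
qed

lemma PD:
  fixes \<phi> \<psi> :: "nat set \<Rightarrow> 'c::comm_semiring_1"
  assumes "finite K" "finite L" "K \<inter> L = {}"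
  shows "(\<Sum>A\<in>Pow (K \<union> L). \<phi> (A \<inter> K) * \<psi> (A \<inter> L)) = (\<Sum>A\<in>Pow K. \<phi> A) * (\<Sum>B\<in>Pow L. \<psi> B)"
proof -
  let ?h = "\<lambda>(A, B). A \<union> B"
  have img: "Pow (K \<union> L) = ?h ` (Pow K \<times> Pow L)"
  proof
    show "Pow (K \<union> L) \<subseteq> ?h ` (Pow K \<times> Pow L)"
    proof
      fix C assume "C \<in> Pow (K \<union> L)"
      then have "C = ?h (C \<inter> K, C \<inter> L)" "(C \<inter> K, C \<inter> L) \<in> Pow K \<times> Pow L" by auto
      then show "C \<in> ?h ` (Pow K \<times> Pow L)" by blast
    qed
  qed auto
  have inj: "inj_on ?h (Pow K \<times> Pow L)"
  proof (rule inj_onI, clarsimp)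
    fix A B A' B' assume "A \<subseteq> K" "B \<subseteq> L" "A' \<subseteq> K" "B' \<subseteq> L" "A \<union> B = A' \<union> B'"
    then have "A = (A \<union> B) \<inter> K" "A' = (A' \<union> B') \<inter> K" "B = (A \<union> B) \<inter> L" "B' = (A' \<union> B') \<inter> L"
      using assms(3) by auto
    then show "A = A' \<and> B = B'" using \<open>A \<union> B = A' \<union> B'\<close> by metis
  qed
  have "(\<Sum>A\<in>Pow (K \<union> L). \<phi> (A \<inter> K) * \<psi> (A \<inter> L))
      = (\<Sum>p\<in>Pow K \<times> Pow L. \<phi> (?h p \<inter> K) * \<psi> (?h p \<inter> L))"
    unfolding img by (subst sum.reindex[OF inj]) (simp add: o_def)
  also have "\<dots> = (\<Sum>p\<in>Pow K \<times> Pow L. \<phi> (fst p) * \<psi> (snd p))"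
  proof (rule sum.cong)
    fix p assume "p \<in> Pow K \<times> Pow L"
    then have "?h p \<inter> K = fst p" "?h p \<inter> L = snd p" using assms(3) by (cases p; auto)+
    then show "\<phi> (?h p \<inter> K) * \<psi> (?h p \<inter> L) = \<phi> (fst p) * \<psi> (snd p)" by simp
  qed simp
  also have "\<dots> = (\<Sum>A\<in>Pow K. \<Sum>B\<in>Pow L. \<phi> A * \<psi> B)"
    by (simp add: sum.cartesian_product split_def)
  also have "\<dots> = (\<Sum>A\<in>Pow K. \<phi> A) * (\<Sum>B\<in>Pow L. \<psi> B)"
    by (simp add: sum_product)
  finally show ?thesis .
qed

lemma BIN:
  fixes u w :: "'c::comm_semiring_1"
  assumes "finite K"
  shows "(\<Sum>A\<in>Pow K. u ^ card A * w ^ (card K - card A)) = (u + w) ^ card K"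
proof -
  have "(u + w) ^ card K = (\<Prod>x\<in>K. u + w)" by simp
  also have "\<dots> = (\<Sum>X\<in>Pow K. (\<Prod>x\<in>X. u) * (\<Prod>x\<in>K - X. w))"
    by (rule prod_add[OF assms])
  also have "\<dots> = (\<Sum>A\<in>Pow K. u ^ card A * w ^ (card K - card A))"
    using assms by (intro sum.cong) (auto simp: card_Diff_subset finite_subset)
  finally show ?thesis by simp
qed

lemma BIN1:
  assumes "finite K"
  shows "(\<Sum>A\<in>Pow K. Xm ^ (card K - card A)) = varX ^ card K"
  using BIN[OF assms, of 1 Xm] by (simp add: Xm_def)

lemma BIN2:
  assumes "finite K"
  shows "(\<Sum>A\<in>Pow K. Ym ^ card A) = varY ^ card K"
  using BIN[OF assms, of Ym 1] by (simp add: Ym_def)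

definition chI :: "nat \<Rightarrow> nat \<Rightarrow> nat \<Rightarrow> nat \<Rightarrow> nat set \<Rightarrow> bool" where
  "chI n k a b A \<longleftrightarrow> A \<inter> {k+b..<n} = {} \<and> card (A \<inter> {k..<k+b}) \<le> 1
     \<and> \<not> ({..<a} \<subseteq> A \<and> A \<inter> {k..<k+b} \<noteq> {})"

definition dl :: "nat \<Rightarrow> nat \<Rightarrow> nat \<Rightarrow> nat set \<Rightarrow> bool" where
  "dl k a b A \<longleftrightarrow> A \<inter> {k..<k+b} \<noteq> {} \<and> \<not> {..<a} \<subseteq> A"

definition rk :: "nat \<Rightarrow> nat \<Rightarrow> nat \<Rightarrow> nat set \<Rightarrow> nat" where
  "rk k a b A = card (A \<inter> {..<k}) + (if dl k a b A then 1 else 0)"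

lemma mrank_char:
  assumes ak: "a \<le> k" and kb: "k + b \<le> n"
    and I: "\<And>A. A \<subseteq> {..<n} \<Longrightarrow> I A \<longleftrightarrow> chI n k a b A"
    and A: "A \<subseteq> {..<n}"
  shows "mrank I A = rk k a b A"
proof -
  have fA: "finite A" using A finite_subset by blast
  have up: "card B \<le> rk k a b A" if B: "B \<subseteq> A" "I B" for B
  proof -
    have cB: "chI n k a b B" using I[of B] B A by auto
    have fB: "finite B" using B fA finite_subset by blast
    have Lp: "B \<inter> {k+b..<n} = {}" using cB unfolding chI_def by simp
    have Bn: "B \<subseteq> {..<n}" using B A by auto
    have "B = (B \<inter> {..<k}) \<union> (B \<inter> {k..<k+b})"
    proof
      show "B \<subseteq> (B \<inter> {..<k}) \<union> (B \<inter> {k..<k+b})"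
      proof
        fix x assume "x \<in> B"
        then have "x < n" "x \<notin> {k+b..<n}" using Bn Lp by auto
        then show "x \<in> (B \<inter> {..<k}) \<union> (B \<inter> {k..<k+b})" using \<open>x \<in> B\<close> by auto
      qed
    qed auto
    then have "card B = card ((B \<inter> {..<k}) \<union> (B \<inter> {k..<k+b}))" by simp
    also have "\<dots> = card (B \<inter> {..<k}) + card (B \<inter> {k..<k+b})"
      by (rule card_Un_disjoint) (use fB in auto)
    finally have cardB: "card B = card (B \<inter> {..<k}) + card (B \<inter> {k..<k+b})" .
    show ?thesis
    proof (cases "B \<inter> {k..<k+b} = {}")
      case True
      have "card (B \<inter> {..<k}) \<le> card (A \<inter> {..<k})" using B fA by (intro card_mono) auto
      then show ?thesis using True cardB by (simp add: rk_def)
    next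
      case False
      then have "card (B \<inter> {k..<k+b}) \<noteq> 0" by simp
      then have c1: "card (B \<inter> {k..<k+b}) = 1" using cB unfolding chI_def by linarith
      have nP: "\<not> {..<a} \<subseteq> B" using cB False unfolding chI_def by auto
      show ?thesis
      proof (cases "dl k a b A")
        case True
        have "card (B \<inter> {..<k}) \<le> card (A \<inter> {..<k})" using B fA by (intro card_mono) auto
        then show ?thesis using True cardB c1 by (simp add: rk_def)
      next
        case ndl: False
        have "A \<inter> {k..<k+b} \<noteq> {}" using False B by auto
        then have PA: "{..<a} \<subseteq> A" using ndl by (simp add: dl_def)
        then obtain p where p: "p < a" "p \<in> A" "p \<notin> B" using nP by auto
        have "B \<inter> {..<k} \<subset> A \<inter> {..<k}" using p B ak by auto
        then have "card (B \<inter> {..<k}) < card (A \<inter> {..<k})" using fA by (intro psubset_card_mono) auto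
        then show ?thesis using ndl cardB c1 by (simp add: rk_def)
      qed
    qed
  qed
  have att: "\<exists>B. B \<subseteq> A \<and> I B \<and> card B = rk k a b A"
  proof (cases "dl k a b A")
    case True
    then obtain e where e: "e \<in> A" "k \<le> e" "e < k + b" unfolding dl_def by auto
    let ?B = "insert e (A \<inter> {..<k})"
    have Bn: "?B \<subseteq> {..<n}" using A e(1) by auto
    have "chI n k a b ?B"
    proof -
      have "?B \<inter> {k..<k+b} = {e}" using e by auto
      moreover have "?B \<inter> {k+b..<n} = {}" using e by auto
      moreover have "\<not> {..<a} \<subseteq> ?B" using True e ak unfolding dl_def by auto
      ultimately show ?thesis unfolding chI_def by simp
    qed
    then have IB: "I ?B" using I[OF Bn] by simp
    have "e \<notin> A \<inter> {..<k}" using e by auto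
    then have "card ?B = rk k a b A" using True fA by (simp add: rk_def)
    moreover have "?B \<subseteq> A" using e by auto
    ultimately show ?thesis using IB by blast
  next
    case False
    let ?B = "A \<inter> {..<k}"
    have "?B \<inter> {k..<k+b} = {}" "?B \<inter> {k+b..<n} = {}" by auto
    then have "chI n k a b ?B" unfolding chI_def by simp
    moreover have "?B \<subseteq> {..<n}" using A by auto
    ultimately have "I ?B" using I by simp
    then show ?thesis using False by (intro exI[of _ ?B]) (auto simp: rk_def)
  qed
  have I0: "I {}" using I[of "{}"] by (simp add: chI_def)
  obtain B where B: "B \<subseteq> A" "I B" "card B = mrank I A" using mrank_obtain[of A I, OF fA I0] by blast
  have "mrank I A \<le> rk k a b A" using up[OF B(1,2)] B(3) by simp
  moreover obtain B' where "B' \<subseteq> A" "I B'" "card B' = rk k a b A" using att by blast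
  then have "rk k a b A \<le> mrank I A" using mrank_ge[OF fA] by metis
  ultimately show ?thesis by simp
qed

definition Fa :: "nat \<Rightarrow> nat \<Rightarrow> int poly poly" where
  "Fa k a = (\<Sum>A\<in>Pow {..<k}. if \<not> {..<a} \<subseteq> A then Xm ^ (k - card A - 1) else 0)"
definition Gb :: "nat \<Rightarrow> nat \<Rightarrow> nat \<Rightarrow> int poly poly" where
  "Gb n k b = (\<Sum>B\<in>Pow {k..<n}. if B \<inter> {k..<k+b} \<noteq> {} then Ym ^ (card B - 1) else 0)"

lemma tutte_formula:
  assumes ak: "a \<le> k" and kb: "k + b \<le> n"
    and R: "\<And>A. A \<subseteq> {..<n} \<Longrightarrow> mrank I A = rk k a b A"
  shows "tutte I {..<n} = varX ^ k * varY ^ (n - k) + (1 - Xm * Ym) * Fa k a * Gb n k b"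
proof -
  let ?K = "{..<k}" and ?L = "{k..<n}"
  define f where "f A = (if \<not> {..<a} \<subseteq> A then Xm ^ (k - card A - 1) else 0)" for A :: "nat set"
  define g where "g B = (if B \<inter> {k..<k+b} \<noteq> {} then Ym ^ (card B - 1) else 0)" for B :: "nat set"
  have E: "{..<n} = ?K \<union> ?L" using kb by auto
  have disj: "?K \<inter> ?L = {}" by auto
  have mE: "mrank I {..<n} = k"
  proof -
    have "\<not> dl k a b {..<n}" using ak kb by (auto simp: dl_def)
    moreover have "{..<n} \<inter> {..<k} = {..<k}" using kb by auto
    ultimately show ?thesis using R[of "{..<n}"] by (simp add: rk_def)
  qed
  have trm: "Xm ^ (mrank I {..<n} - mrank I A) * Ym ^ (card A - mrank I A)
     = Xm ^ (card ?K - card (A \<inter> ?K)) * Ym ^ card (A \<inter> ?L) + (1 - Xm * Ym) * (f (A \<inter> ?K) * g (A \<inter> ?L))"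
    if A: "A \<subseteq> {..<n}" for A
  proof -
    have fA: "finite A" using A finite_subset by blast
    have AU: "A = (A \<inter> ?K) \<union> (A \<inter> ?L)" using A E by auto
    have cA: "card A = card (A \<inter> ?K) + card (A \<inter> ?L)"
      by (subst AU, rule card_Un_disjoint) (use fA in auto)
    have dlE: "dl k a b A \<longleftrightarrow> (A \<inter> ?L) \<inter> {k..<k+b} \<noteq> {} \<and> \<not> {..<a} \<subseteq> A \<inter> ?K"
      using ak kb by (auto simp: dl_def)
    show ?thesis
    proof (cases "dl k a b A")
      case True
      have ck: "card (A \<inter> ?K) < k"
      proof (rule ccontr)
        assume "\<not> ?thesis"
        moreover have "card (A \<inter> ?K) \<le> card ?K" by (intro card_mono) auto
        ultimately have "card (A \<inter> ?K) = card ?K" by simp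
        then have "A \<inter> ?K = ?K" by (intro card_subset_eq) auto
        then show False using True dlE ak by auto
      qed
      then obtain i where i: "k - card (A \<inter> ?K) = Suc i" by (metis Suc_diff_Suc)
      have "A \<inter> ?L \<noteq> {}" using True dlE by auto
      then have "card (A \<inter> ?L) \<noteq> 0" using fA by simp
      then obtain j where j: "card (A \<inter> ?L) = Suc j" using not0_implies_Suc by blast
      have r: "mrank I A = card (A \<inter> ?K) + 1" using R[OF A] True by (simp add: rk_def)
      have e1: "mrank I {..<n} - mrank I A = i" using mE r i by simp
      have e2: "card A - mrank I A = j" using cA r j by simp
      have fg: "f (A \<inter> ?K) = Xm ^ i" "g (A \<inter> ?L) = Ym ^ j"
        using True dlE i j by (auto simp: f_def g_def)
      show ?thesis unfolding e1 e2 fg using i j by (simp add: algebra_simps)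
    next
      case False
      have r: "mrank I A = card (A \<inter> ?K)" using R[OF A] False by (simp add: rk_def)
      have "f (A \<inter> ?K) * g (A \<inter> ?L) = 0" using False dlE by (auto simp: f_def g_def)
      then show ?thesis using r mE cA by simp
    qed
  qed
  have "tutte I {..<n} = (\<Sum>A\<in>Pow {..<n}. Xm ^ (card ?K - card (A \<inter> ?K)) * Ym ^ card (A \<inter> ?L)
      + (1 - Xm * Ym) * (f (A \<inter> ?K) * g (A \<inter> ?L)))"
    unfolding tutte_alt by (rule sum.cong) (auto simp: trm)
  also have "\<dots> = (\<Sum>A\<in>Pow (?K \<union> ?L). Xm ^ (card ?K - card (A \<inter> ?K)) * Ym ^ card (A \<inter> ?L))
      + (1 - Xm * Ym) * (\<Sum>A\<in>Pow (?K \<union> ?L). f (A \<inter> ?K) * g (A \<inter> ?L))"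
    unfolding E by (simp add: sum.distrib sum_distrib_left)
  also have "(\<Sum>A\<in>Pow (?K \<union> ?L). Xm ^ (card ?K - card (A \<inter> ?K)) * Ym ^ card (A \<inter> ?L))
      = (\<Sum>A\<in>Pow ?K. Xm ^ (card ?K - card A)) * (\<Sum>B\<in>Pow ?L. Ym ^ card B)"
    by (rule PD[of ?K ?L "\<lambda>A. Xm ^ (card ?K - card A)" "\<lambda>B. Ym ^ card B"]) auto
  also have "\<dots> = varX ^ k * varY ^ (n - k)"
    using BIN1[of ?K] BIN2[of ?L] by simp
  also have "(\<Sum>A\<in>Pow (?K \<union> ?L). f (A \<inter> ?K) * g (A \<inter> ?L)) = (\<Sum>A\<in>Pow ?K. f A) * (\<Sum>B\<in>Pow ?L. g B)"
    by (rule PD) auto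
  also have "(\<Sum>A\<in>Pow ?K. f A) = Fa k a" by (simp add: Fa_def f_def)
  also have "(\<Sum>B\<in>Pow ?L. g B) = Gb n k b" by (simp add: Gb_def g_def)
  finally show ?thesis by (simp add: mult.assoc)
qed

lemma Fa_eq:
  assumes ak: "a \<le> k"
  shows "Xm * Fa k a = varX ^ k - varX ^ (k - a)"
proof -
  let ?K = "{..<k}" and ?P = "{..<a}" and ?Q = "{a..<k}"
  have "Xm * Fa k a = (\<Sum>A\<in>Pow ?K. if \<not> ?P \<subseteq> A then Xm ^ (k - card A) else 0)"
    unfolding Fa_def sum_distrib_left
  proof (rule sum.cong)
    fix A assume A: "A \<in> Pow ?K"
    show "Xm * (if \<not> ?P \<subseteq> A then Xm ^ (k - card A - 1) else 0) = (if \<not> ?P \<subseteq> A then Xm ^ (k - card A) else 0)"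
    proof (cases "?P \<subseteq> A")
      case False
      have ck: "card A < k"
      proof (rule ccontr)
        assume "\<not> ?thesis"
        moreover have "card A \<le> card ?K" using A by (intro card_mono) auto
        ultimately have "card A = card ?K" by simp
        then have "A = ?K" using A by (intro card_subset_eq) auto
        then show False using False ak by auto
      qed
      then obtain i where "k - card A = Suc i" by (metis Suc_diff_Suc)
      then show ?thesis using False by simp
    qed simp
  qed simp
  also have "\<dots> = (\<Sum>A\<in>Pow ?K. Xm ^ (card ?K - card A)) - (\<Sum>A\<in>Pow ?K. if ?P \<subseteq> A then Xm ^ (k - card A) else 0)"
    by (simp only: sum_subtractf[symmetric]) (rule sum.cong; simp)
  also have "(\<Sum>A\<in>Pow ?K. Xm ^ (card ?K - card A)) = varX ^ k" using BIN1[of ?K] by simp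
  also have "(\<Sum>A\<in>Pow ?K. if ?P \<subseteq> A then Xm ^ (k - card A) else 0)
      = (\<Sum>A\<in>Pow (?P \<union> ?Q). (if A \<inter> ?P = ?P then 1 else 0) * Xm ^ (card ?Q - card (A \<inter> ?Q)))"
  proof -
    have KPQ: "?K = ?P \<union> ?Q" using ak by auto
    show ?thesis unfolding KPQ[symmetric]
    proof (rule sum.cong)
      fix A assume A: "A \<in> Pow ?K"
      show "(if ?P \<subseteq> A then Xm ^ (k - card A) else 0) =
            (if A \<inter> ?P = ?P then 1 else 0) * Xm ^ (card ?Q - card (A \<inter> ?Q))"
      proof (cases "?P \<subseteq> A")
        case True
        have fA: "finite A" using A finite_subset by blast
        have "A = ?P \<union> (A \<inter> ?Q)" using True A KPQ by auto
        then have "card A = a + card (A \<inter> ?Q)"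
          by (metis card_Un_disjoint card_lessThan fA finite_Int finite_lessThan Int_lower1
              disjoint_iff IntD2 atLeastLessThan_iff lessThan_iff not_le)
        moreover have "A \<inter> ?P = ?P" using True by auto
        ultimately show ?thesis using True by simp
      next
        case False
        then have "A \<inter> ?P \<noteq> ?P" by auto
        then show ?thesis using False by simp
      qed
    qed simp
  qed
  also have "\<dots> = (\<Sum>A\<in>Pow ?P. if A = ?P then 1 else 0) * (\<Sum>B\<in>Pow ?Q. Xm ^ (card ?Q - card B))"
    by (rule PD[of ?P ?Q "\<lambda>A. if A = ?P then 1 else 0"]) auto
  also have "\<dots> = varX ^ (k - a)"
    using BIN1[of ?Q] by (simp add: sum.delta)
  finally show ?thesis .
qed

lemma Gb_eq:
  assumes kb: "k + b \<le> n"
  shows "Ym * Gb n k b = varY ^ (n - k) - varY ^ (n - k - b)"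
proof -
  let ?L = "{k..<n}" and ?Bd = "{k..<k+b}" and ?Q = "{k+b..<n}"
  have "Ym * Gb n k b = (\<Sum>B\<in>Pow ?L. if B \<inter> ?Bd \<noteq> {} then Ym ^ card B else 0)"
    unfolding Gb_def sum_distrib_left
  proof (rule sum.cong)
    fix B assume B: "B \<in> Pow ?L"
    show "Ym * (if B \<inter> ?Bd \<noteq> {} then Ym ^ (card B - 1) else 0) = (if B \<inter> ?Bd \<noteq> {} then Ym ^ card B else 0)"
    proof (cases "B \<inter> ?Bd = {}")
      case False
      have fB: "finite B" using B finite_subset by blast
      then have "card B \<noteq> 0" using False by auto
      then obtain i where "card B = Suc i" using not0_implies_Suc by blast
      then show ?thesis using False by simp
    qed simp
  qed simp
  also have "\<dots> = (\<Sum>B\<in>Pow ?L. Ym ^ card B) - (\<Sum>B\<in>Pow ?L. if B \<inter> ?Bd = {} then Ym ^ card B else 0)"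
    by (simp only: sum_subtractf[symmetric]) (rule sum.cong; simp)
  also have "(\<Sum>B\<in>Pow ?L. Ym ^ card B) = varY ^ (n - k)" using BIN2[of ?L] by simp
  also have "(\<Sum>B\<in>Pow ?L. if B \<inter> ?Bd = {} then Ym ^ card B else 0)
      = (\<Sum>B\<in>Pow (?Bd \<union> ?Q). (if B \<inter> ?Bd = {} then 1 else 0) * Ym ^ card (B \<inter> ?Q))"
  proof -
    have LBQ: "?L = ?Bd \<union> ?Q" using kb by auto
    show ?thesis unfolding LBQ[symmetric]
    proof (rule sum.cong)
      fix B assume B: "B \<in> Pow ?L"
      show "(if B \<inter> ?Bd = {} then Ym ^ card B else 0) =
            (if B \<inter> ?Bd = {} then 1 else 0) * Ym ^ card (B \<inter> ?Q)"
      proof (cases "B \<inter> ?Bd = {}")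
        case True
        have "B = B \<inter> ?Q"
        proof
          show "B \<subseteq> B \<inter> ?Q"
          proof
            fix x assume x: "x \<in> B"
            then have "x \<in> ?L" "x \<notin> ?Bd" using B True by auto
            then show "x \<in> B \<inter> ?Q" using x by auto
          qed
        qed auto
        then show ?thesis using True by simp
      qed simp
    qed simp
  qed
  also have "\<dots> = (\<Sum>A\<in>Pow ?Bd. if A = {} then 1 else 0) * (\<Sum>B\<in>Pow ?Q. Ym ^ card B)"
  proof -
    have "(\<Sum>B\<in>Pow (?Bd \<union> ?Q). (if B \<inter> ?Bd = {} then 1 else 0) * Ym ^ card (B \<inter> ?Q))
       = (\<Sum>A\<in>Pow ?Bd. if A = {} then 1 else 0) * (\<Sum>B\<in>Pow ?Q. Ym ^ card B)"
      by (rule PD[of ?Bd ?Q "\<lambda>A. if A = {} then 1 else 0" "\<lambda>B. Ym ^ card B"]) auto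
    then show ?thesis .
  qed
  also have "\<dots> = varY ^ (n - k - b)"
    using BIN2[of ?Q] by (simp add: sum.delta)
  finally show ?thesis .
qed

definition ev :: "int poly poly \<Rightarrow> int" where "ev P = poly (poly P [:2:]) 2"

lemma ev_simps [simp]:
  "ev (p + q) = ev p + ev q" "ev (p - q) = ev p - ev q" "ev (p * q) = ev p * ev q"
  "ev (p ^ m) = ev p ^ m" "ev 1 = 1" "ev 0 = 0" "ev varX = 2" "ev varY = 2"
  "ev (of_int c) = c" "ev (sum f A) = (\<Sum>x\<in>A. ev (f x))"
  by (simp_all add: ev_def varX_def varY_def poly_sum)

lemma ev_Xm [simp]: "ev Xm = 1" and ev_Ym [simp]: "ev Ym = 1"
  by (simp_all add: Xm_def Ym_def)

lemma Xm_nz: "Xm \<noteq> 0" and Ym_nz: "Ym \<noteq> 0"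
  using ev_Xm ev_Ym by force+

lemma Fa_diff:
  assumes "1 \<le> a" "a \<le> k"
  shows "Fa k a - Fa k (a - 1) = varX ^ (k - a)"
proof -
  have "Xm * (Fa k a - Fa k (a - 1)) = varX ^ (k - (a - 1)) - varX ^ (k - a)"
    using Fa_eq[of a k] Fa_eq[of "a - 1" k] assms by (simp add: algebra_simps)
  also have "k - (a - 1) = Suc (k - a)" using assms by simp
  also have "varX ^ Suc (k - a) - varX ^ (k - a) = Xm * varX ^ (k - a)"
    by (simp add: Xm_def algebra_simps)
  finally show ?thesis using Xm_nz by simp
qed

lemma Gb_diff:
  assumes "1 \<le> b" "k + b \<le> n"
  shows "Gb n k b - Gb n k (b - 1) = varY ^ (n - k - b)"
proof -
  have "Ym * (Gb n k b - Gb n k (b - 1)) = varY ^ (n - k - (b - 1)) - varY ^ (n - k - b)"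
    using Gb_eq[of k b n] Gb_eq[of k "b - 1" n] assms by (simp add: algebra_simps)
  also have "n - k - (b - 1) = Suc (n - k - b)" using assms by simp
  also have "varY ^ Suc (n - k - b) - varY ^ (n - k - b) = Ym * varY ^ (n - k - b)"
    by (simp add: Ym_def algebra_simps)
  finally show ?thesis using Ym_nz by simp
qed

definition vb :: "nat \<Rightarrow> nat \<Rightarrow> nat \<Rightarrow> nat \<Rightarrow> nat set" where
  "vb k a b e = (if e < k then {e} else if e < k + b then {..<a} else {})"

lemma two_elems:
  assumes "finite X" "\<not> card X \<le> 1"
  obtains x y where "x \<in> X" "y \<in> X" "x \<noteq> y"
  using assms card_le_Suc0_iff_eq by (metis One_nat_def)

lemma bin_char:
  assumes ak: "a \<le> k" and kb: "k + b \<le> n" and A: "A \<subseteq> {..<n}"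
  shows "bin_indep (vb k a b) A \<longleftrightarrow> chI n k a b A"
proof
  assume ch: "chI n k a b A"
  show "bin_indep (vb k a b) A"
    unfolding bin_indep_def
  proof (intro allI impI)
    fix B assume B: "B \<subseteq> A" "B \<noteq> {}"
    show "{i. odd (card {e \<in> B. i \<in> vb k a b e})} \<noteq> {}"
    proof (cases "\<exists>e\<in>B. k \<le> e \<and> e < k + b")
      case True
      then obtain e0 where e0: "e0 \<in> B" "k \<le> e0" "e0 < k + b" by blast
      have "A \<inter> {k..<k+b} \<noteq> {}" using e0 B by auto
      then obtain p where p: "p < a" "p \<notin> A" using ch unfolding chI_def by auto
      have fin: "finite (A \<inter> {k..<k+b})" by simp
      have one: "\<forall>e\<in>B. k \<le> e \<and> e < k + b \<longrightarrow> e = e0"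
      proof (intro ballI impI)
        fix e assume "e \<in> B" "k \<le> e \<and> e < k + b"
        then have "e \<in> A \<inter> {k..<k+b}" "e0 \<in> A \<inter> {k..<k+b}" using e0 B by auto
        then show "e = e0" using ch fin card_le_Suc0_iff_eq unfolding chI_def by (metis One_nat_def)
      qed
      have "{e \<in> B. p \<in> vb k a b e} = {e0}"
      proof
        show "{e \<in> B. p \<in> vb k a b e} \<subseteq> {e0}"
        proof
          fix e assume e: "e \<in> {e \<in> B. p \<in> vb k a b e}"
          show "e \<in> {e0}"
          proof (cases "e < k")
            case True
            then have "e = p" using e by (simp add: vb_def)
            then show ?thesis using e p B by auto
          next
            case False
            then have "e < k + b" using e by (auto simp: vb_def split: if_splits)
            then show ?thesis using one False e by auto
          qed
        qed
      next
        show "{e0} \<subseteq> {e \<in> B. p \<in> vb k a b e}" using e0 p by (auto simp: vb_def)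
      qed
      then have "p \<in> {i. odd (card {e \<in> B. i \<in> vb k a b e})}" by simp
      then show ?thesis by blast
    next
      case False
      obtain e where e: "e \<in> B" using B by blast
      have "e < n" using e B A by auto
      have "e \<notin> {k+b..<n}" using ch e B unfolding chI_def by auto
      then have ek: "e < k" using False e \<open>e < n\<close> by auto
      have "{e' \<in> B. e \<in> vb k a b e'} = {e}"
      proof
        show "{e' \<in> B. e \<in> vb k a b e'} \<subseteq> {e}"
        proof
          fix e' assume e': "e' \<in> {e' \<in> B. e \<in> vb k a b e'}"
          show "e' \<in> {e}"
          proof (cases "e' < k")
            case True then show ?thesis using e' by (simp add: vb_def)
          next
            case F: False
            then have "e' < k + b" using e' by (auto simp: vb_def split: if_splits)
            then show ?thesis using False F e' by auto
          qed
        qed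
      next
        show "{e} \<subseteq> {e' \<in> B. e \<in> vb k a b e'}" using e ek by (auto simp: vb_def)
      qed
      then have "e \<in> {i. odd (card {e' \<in> B. i \<in> vb k a b e'})}" by simp
      then show ?thesis by blast
    qed
  qed
next
  assume bi: "bin_indep (vb k a b) A"
  have bad: "False" if "B \<subseteq> A" "B \<noteq> {}" "\<And>i. even (card {e \<in> B. i \<in> vb k a b e})" for B
    using bi that unfolding bin_indep_def by blast
  show "chI n k a b A"
    unfolding chI_def
  proof (intro conjI)
    show "A \<inter> {k+b..<n} = {}"
    proof (rule ccontr)
      assume "A \<inter> {k+b..<n} \<noteq> {}"
      then obtain e where e: "e \<in> A" "k + b \<le> e" by auto
      have "{e' \<in> {e}. i \<in> vb k a b e'} = {}" for i using e by (auto simp: vb_def)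
      then have "even (card {e' \<in> {e}. i \<in> vb k a b e'})" for i by (simp only: card.empty even_zero)
      then show False using bad[of "{e}"] e by blast
    qed
  next
    show "card (A \<inter> {k..<k+b}) \<le> 1"
    proof (rule ccontr)
      assume "\<not> ?thesis"
      then obtain e1 e2 where e: "e1 \<in> A \<inter> {k..<k+b}" "e2 \<in> A \<inter> {k..<k+b}" "e1 \<noteq> e2"
        using two_elems[of "A \<inter> {k..<k+b}"] by auto
      have "even (card {e \<in> {e1, e2}. i \<in> vb k a b e})" for i
      proof (cases "i < a")
        case True
        then have "{e \<in> {e1, e2}. i \<in> vb k a b e} = {e1, e2}" using e by (auto simp: vb_def)
        then show ?thesis using e by simp
      next
        case False
        then have "{e \<in> {e1, e2}. i \<in> vb k a b e} = {}" using e by (auto simp: vb_def)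
        then show ?thesis by (simp only: card.empty even_zero)
      qed
      then show False using bad[of "{e1, e2}"] e by auto
    qed
  next
    show "\<not> ({..<a} \<subseteq> A \<and> A \<inter> {k..<k+b} \<noteq> {})"
    proof
      assume H: "{..<a} \<subseteq> A \<and> A \<inter> {k..<k+b} \<noteq> {}"
      then obtain e where e: "e \<in> A" "k \<le> e" "e < k + b" by auto
      have "even (card {e' \<in> insert e {..<a}. i \<in> vb k a b e'})" for i
      proof (cases "i < a")
        case True
        then have "{e' \<in> insert e {..<a}. i \<in> vb k a b e'} = {i, e}" using e ak
          by (auto simp: vb_def)
        moreover have "i \<noteq> e" using True e ak by simp
        ultimately show ?thesis by simp
      next
        case False
        then have "{e' \<in> insert e {..<a}. i \<in> vb k a b e'} = {}" using e ak by (auto simp: vb_def)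
        then show ?thesis by (simp only: card.empty even_zero)
      qed
      then show False using bad[of "insert e {..<a}"] e H by auto
    qed
  qed
qed

definition gG :: "nat \<Rightarrow> nat \<Rightarrow> nat \<Rightarrow> nat \<Rightarrow> nat \<times> nat" where
  "gG k a b e = (if e < k then (e, Suc e) else if e < k + b then (0, a) else (0, 0))"

lemma cut_lemma:
  assumes S: "\<forall>g\<in>A'. fst (G g) \<in> S \<longleftrightarrow> snd (G g) \<in> S"
    and r: "(adj G A')\<^sup>*\<^sup>* x y" and x: "x \<in> S"
  shows "y \<in> S"
  using r x
proof (induction rule: rtranclp_induct)
  case (step y z)
  then show ?case using S unfolding adj_def by auto
qed simp

lemma path_lemma:
  assumes "{..<a} \<subseteq> A'" "a \<le> k"
  shows "j \<le> a \<Longrightarrow> (adj (gG k a b) A')\<^sup>*\<^sup>* 0 j"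
proof (induction j)
  case (Suc j)
  have "adj (gG k a b) A' j (Suc j)"
    unfolding adj_def using assms Suc.prems by (intro bexI[of _ j]) (auto simp: gG_def)
  then show ?case using Suc by (meson Suc_leD rtranclp.rtrancl_into_rtrancl)
qed simp

lemma graph_char:
  assumes ak: "a \<le> k" and kb: "k + b \<le> n" and A: "A \<subseteq> {..<n}"
  shows "graph_indep (gG k a b) A \<longleftrightarrow> chI n k a b A"
proof
  assume ch: "chI n k a b A"
  have noLp: "\<And>e. e \<in> A \<Longrightarrow> e < k + b" using ch A unfolding chI_def by fastforce
  have oneB: "\<And>e e'. e \<in> A \<Longrightarrow> e' \<in> A \<Longrightarrow> k \<le> e \<Longrightarrow> k \<le> e' \<Longrightarrow> e = e'"
  proof -
    fix e e' assume "e \<in> A" "e' \<in> A" "k \<le> e" "k \<le> e'"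
    then have "e \<in> A \<inter> {k..<k+b}" "e' \<in> A \<inter> {k..<k+b}" using noLp by auto
    then show "e = e'" using ch card_le_Suc0_iff_eq[of "A \<inter> {k..<k+b}"] unfolding chI_def by auto
  qed
  show "graph_indep (gG k a b) A"
    unfolding graph_indep_def
  proof
    fix e assume e: "e \<in> A"
    let ?R = "adj (gG k a b) (A - {e})"
    have main: "\<exists>S. (\<forall>g\<in>A - {e}. fst (gG k a b g) \<in> S \<longleftrightarrow> snd (gG k a b g) \<in> S)
        \<and> fst (gG k a b e) \<in> S \<and> snd (gG k a b e) \<notin> S"
    proof (cases "e < k")
      case ek: True
      show ?thesis
      proof (cases "A \<inter> {k..<k+b} = {} \<or> a \<le> e")
        case True
        show ?thesis
          apply (rule exI[of _ "{v. v \<le> e}"])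
          using True ek noLp by (auto simp: gG_def)
      next
        case False
        then obtain f where f: "f < a" "f \<notin> A" using ch unfolding chI_def by auto
        have fe: "f \<noteq> e" using f e by auto
        have gf: "\<And>g. g \<in> A \<Longrightarrow> g \<noteq> f" using f by auto
        show ?thesis
        proof (cases "e < f")
          case True
          show ?thesis
            apply (rule exI[of _ "{v. v \<le> e \<or> f < v}"])
            using True ek noLp f fe False ak gf by (auto simp: gG_def less_Suc_eq)
        next
          case F: False
          show ?thesis
            apply (rule exI[of _ "{v. f < v \<and> v \<le> e}"])
            using F ek noLp f fe False ak gf by (auto simp: gG_def less_Suc_eq)
        qed
      qed
    next
      case ek: False
      then have eB: "e < k + b" using noLp e by auto
      have "A \<inter> {k..<k+b} \<noteq> {}" using e ek eB by auto
      then obtain f where f: "f < a" "f \<notin> A" using ch unfolding chI_def by auto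
      have gf: "\<And>g. g \<in> A \<Longrightarrow> g \<noteq> f" using f by auto
      have cl: "\<forall>g\<in>A - {e}. fst (gG k a b g) \<in> {v. v \<le> f} \<longleftrightarrow> snd (gG k a b g) \<in> {v. v \<le> f}"
      proof
        fix g assume g: "g \<in> A - {e}"
        then have "g \<noteq> f" using f by auto
        moreover have "g < k" using g oneB[OF e, of g] ek by (cases "g < k") auto
        ultimately show "fst (gG k a b g) \<in> {v. v \<le> f} \<longleftrightarrow> snd (gG k a b g) \<in> {v. v \<le> f}"
          by (simp add: gG_def) linarith
      qed
      show ?thesis
        apply (rule exI[of _ "{v. v \<le> f}"])
        using cl ek eB f by (auto simp: gG_def)
    qed
    then obtain S where S: "\<forall>g\<in>A - {e}. fst (gG k a b g) \<in> S \<longleftrightarrow> snd (gG k a b g) \<in> S"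
      "fst (gG k a b e) \<in> S" "snd (gG k a b e) \<notin> S" by blast
    show "\<not> ?R\<^sup>*\<^sup>* (fst (gG k a b e)) (snd (gG k a b e))"
      using cut_lemma[OF S(1) _ S(2)] S(3) by blast
  qed
next
  assume gi: "graph_indep (gG k a b) A"
  have bad: "False" if "e \<in> A" "(adj (gG k a b) (A - {e}))\<^sup>*\<^sup>* (fst (gG k a b e)) (snd (gG k a b e))" for e
    using gi that unfolding graph_indep_def by blast
  show "chI n k a b A"
    unfolding chI_def
  proof (intro conjI)
    show "A \<inter> {k+b..<n} = {}"
    proof (rule ccontr)
      assume "A \<inter> {k+b..<n} \<noteq> {}"
      then obtain e where e: "e \<in> A" "k + b \<le> e" by auto
      then have "gG k a b e = (0, 0)" by (simp add: gG_def)
      then show False using bad[OF e(1)] by simp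
    qed
  next
    show "card (A \<inter> {k..<k+b}) \<le> 1"
    proof (rule ccontr)
      assume "\<not> ?thesis"
      then obtain e1 e2 where e: "e1 \<in> A \<inter> {k..<k+b}" "e2 \<in> A \<inter> {k..<k+b}" "e1 \<noteq> e2"
        using two_elems[of "A \<inter> {k..<k+b}"] by auto
      have "adj (gG k a b) (A - {e1}) 0 a"
        unfolding adj_def using e by (intro bexI[of _ e2]) (auto simp: gG_def)
      moreover have "gG k a b e1 = (0, a)" using e by (simp add: gG_def)
      ultimately show False using bad[of e1] e by auto
    qed
  next
    show "\<not> ({..<a} \<subseteq> A \<and> A \<inter> {k..<k+b} \<noteq> {})"
    proof
      assume H: "{..<a} \<subseteq> A \<and> A \<inter> {k..<k+b} \<noteq> {}"
      then obtain e where e: "e \<in> A" "k \<le> e" "e < k + b" by auto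
      have "{..<a} \<subseteq> A - {e}" using H e ak by auto
      from path_lemma[OF this ak, of a b] have "(adj (gG k a b) (A - {e}))\<^sup>*\<^sup>* 0 a" by simp
      moreover have "gG k a b e = (0, a)" using e by (simp add: gG_def)
      ultimately show False using bad[of e] e by auto
    qed
  qed
qed

lemma zspan_base: "p \<in> S \<Longrightarrow> p \<in> zspan S"
  unfolding zspan_def by (rule CollectI, rule exI[of _ "{p}"], rule exI[of _ "\<lambda>_. 1"]) simp

lemma zspan_add:
  assumes "p \<in> zspan S" "q \<in> zspan S"
  shows "p + q \<in> zspan S"
proof -
  obtain T1 c1 where 1: "p = (\<Sum>x\<in>T1. of_int (c1 x) * x)" "finite T1" "T1 \<subseteq> S"
    using assms(1) unfolding zspan_def by blast
  obtain T2 c2 where 2: "q = (\<Sum>x\<in>T2. of_int (c2 x) * x)" "finite T2" "T2 \<subseteq> S"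
    using assms(2) unfolding zspan_def by blast
  define c where "c x = (if x \<in> T1 then c1 x else 0) + (if x \<in> T2 then c2 x else 0)" for x
  have fU: "finite (T1 \<union> T2)" using 1(2) 2(2) by simp
  have "(\<Sum>x\<in>T1 \<union> T2. of_int (c x) * x)
      = (\<Sum>x\<in>T1 \<union> T2. (if x \<in> T1 then of_int (c1 x) * x else 0)
      + (if x \<in> T2 then of_int (c2 x) * x else 0))"
  proof (rule sum.cong)
    fix x show "of_int (c x) * x = (if x \<in> T1 then of_int (c1 x) * x else 0)
      + (if x \<in> T2 then of_int (c2 x) * x else 0)"
      by (cases "x \<in> T1"; cases "x \<in> T2") (simp_all add: c_def distrib_right)
  qed simp
  also have "\<dots> = (\<Sum>x\<in>T1 \<union> T2. if x \<in> T1 then of_int (c1 x) * x else 0)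
      + (\<Sum>x\<in>T1 \<union> T2. if x \<in> T2 then of_int (c2 x) * x else 0)"
    by (rule sum.distrib)
  also have "(\<Sum>x\<in>T1 \<union> T2. if x \<in> T1 then of_int (c1 x) * x else 0) = p"
    using sum.inter_restrict[OF fU, of "\<lambda>x. of_int (c1 x) * x" T1] 1(1)
    by (simp add: Int_absorb1)
  also have "(\<Sum>x\<in>T1 \<union> T2. if x \<in> T2 then of_int (c2 x) * x else 0) = q"
    using sum.inter_restrict[OF fU, of "\<lambda>x. of_int (c2 x) * x" T2] 2(1)
    by (simp add: Int_absorb1)
  finally have eq: "p + q = (\<Sum>x\<in>T1 \<union> T2. of_int (c x) * x)" by simp
  show ?thesis unfolding zspan_def
    by (intro CollectI exI[of _ "T1 \<union> T2"] exI[of _ c] conjI) (fact eq, use 1 2 in auto)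
qed

lemma zspan_neg:
  assumes "p \<in> zspan S"
  shows "- p \<in> zspan S"
proof -
  obtain T c where 1: "p = (\<Sum>x\<in>T. of_int (c x) * x)" "finite T" "T \<subseteq> S"
    using assms unfolding zspan_def by blast
  have eq: "- p = (\<Sum>x\<in>T. of_int ((\<lambda>x. - c x) x) * x)" unfolding 1 by (simp add: sum_negf)
  show ?thesis unfolding zspan_def
    by (intro CollectI exI[of _ T] exI[of _ "\<lambda>x. - c x"] conjI) (fact eq, fact 1(2), fact 1(3))
qed

lemma zspan_diff: "p \<in> zspan S \<Longrightarrow> q \<in> zspan S \<Longrightarrow> p - q \<in> zspan S"
  using zspan_add[of p S "- q"] zspan_neg[of q S] by simp

definition ev1 :: "int poly poly \<Rightarrow> int" where "ev1 P = poly (poly P [:1:]) 1"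

lemma ev1_simps [simp]:
  "ev1 (p + q) = ev1 p + ev1 q" "ev1 (p - q) = ev1 p - ev1 q" "ev1 (p * q) = ev1 p * ev1 q"
  "ev1 1 = 1" "ev1 0 = 0" "ev1 varX = 1" "ev1 varY = 1"
  by (simp_all add: ev1_def varX_def varY_def)

definition CC :: "int poly poly" where "CC = 1 - Xm * Ym"

lemma CC_nz: "CC \<noteq> 0"
proof -
  have "ev1 CC = 1" by (simp add: CC_def Xm_def Ym_def)
  then show ?thesis by force
qed

lemma ev_CC: "ev CC = 0" by (simp add: CC_def)

lemma mono_eq: "varX ^ i * varY ^ j = monom (monom 1 i) j"
proof -
  have "varY ^ j = monom 1 j" by (simp add: varY_def monom_altdef)
  moreover have "varX ^ i = [:monom 1 i:]" by (simp add: varX_def poly_const_pow monom_altdef)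
  ultimately show ?thesis by (simp add: smult_monom)
qed

lemma coeff_mono:
  "coeff (coeff (of_int c * (varX ^ i * varY ^ j)) j') i' = (if j = j' \<and> i = i' then c else 0)"
  unfolding mono_eq by (simp add: of_int_poly)

lemma lower_bound:
  fixes n k :: nat
  assumes kn: "k \<le> n"
    and inS: "\<And>a b. a \<le> k \<Longrightarrow> b \<le> n - k \<Longrightarrow>
       varX ^ k * varY ^ (n - k) + (1 - Xm * Ym) * Fa k a * Gb n k b \<in> S"
  shows "\<exists>T0. T0 \<subseteq> zspan S \<and> zindep T0 \<and> card T0 = k * (n - k) + 1"
proof -
  define Tf where "Tf a b = varX ^ k * varY ^ (n - k) + CC * Fa k a * Gb n k b" for a b
  have TfS: "Tf a b \<in> zspan S" if "a \<le> k" "b \<le> n - k" for a b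
    using inS[OF that] unfolding Tf_def CC_def by (rule zspan_base)
  define W0 where "W0 = varX ^ k * varY ^ (n - k)"
  define Wf where "Wf t = CC * (varX ^ (k - fst t) * varY ^ (n - k - snd t))" for t
  define D' where "D' = {1..k} \<times> {1..n-k}"
  have Fa0: "Fa k 0 = 0" by (simp add: Fa_def)
  have W0S: "W0 \<in> zspan S" using TfS[of 0 0] by (simp add: Tf_def Fa0 W0_def)
  have WfS: "Wf t \<in> zspan S" if "t \<in> D'" for t
  proof -
    obtain a b where tab: "t = (a, b)" by (cases t)
    then have t: "t = (a, b)" "1 \<le> a" "a \<le> k" "1 \<le> b" "b \<le> n - k"
      using that unfolding D'_def by auto
    have "Tf a b - Tf (a - 1) b - Tf a (b - 1) + Tf (a - 1) (b - 1)
        = CC * ((Fa k a - Fa k (a - 1)) * (Gb n k b - Gb n k (b - 1)))"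
      by (simp add: Tf_def algebra_simps)
    also have "\<dots> = Wf t"
      using Fa_diff[of a k] Gb_diff[of b k n] t kn by (simp add: Wf_def)
    finally have eq: "Wf t = Tf a b - Tf (a - 1) b - Tf a (b - 1) + Tf (a - 1) (b - 1)" by simp
    show ?thesis unfolding eq using t
      by (intro zspan_add zspan_diff TfS) auto
  qed
  have evW0: "ev W0 = 2 ^ n" using kn by (simp add: W0_def power_add[symmetric])
  have evWf: "ev (Wf t) = 0" for t by (simp add: Wf_def ev_CC)
  have W0n: "W0 \<notin> Wf ` D'" using evW0 evWf by force
  have key: "(\<Sum>t\<in>D'. of_int (d t) * (varX ^ (k - fst t) * varY ^ (n - k - snd t))) = 0 \<Longrightarrow> t0 \<in> D' \<Longrightarrow> d t0 = 0"
    for d t0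
  proof -
    assume s: "(\<Sum>t\<in>D'. of_int (d t) * (varX ^ (k - fst t) * varY ^ (n - k - snd t))) = 0" and t0: "t0 \<in> D'"
    have "0 = coeff (coeff (\<Sum>t\<in>D'. of_int (d t) * (varX ^ (k - fst t) * varY ^ (n - k - snd t))) (n - k - snd t0)) (k - fst t0)"
      using s by simp
    also have "\<dots> = (\<Sum>t\<in>D'. if t = t0 then d t else 0)"
      unfolding coeff_sum coeff_mono
    proof (rule sum.cong)
      fix t assume t: "t \<in> D'"
      have "(n - k - snd t = n - k - snd t0 \<and> k - fst t = k - fst t0) \<longleftrightarrow> t = t0"
        using t t0 unfolding D'_def by (cases t; cases t0) auto
      then show "(if n - k - snd t = n - k - snd t0 \<and> k - fst t = k - fst t0 then d t else 0) = (if t = t0 then d t else 0)"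
        by simp
    qed simp
    also have "\<dots> = d t0" using t0 by (simp add: D'_def)
    finally show "d t0 = 0" by simp
  qed
  have inj: "inj_on Wf D'"
  proof (rule inj_onI)
    fix s t assume st: "s \<in> D'" "t \<in> D'" "Wf s = Wf t"
    then have m: "varX ^ (k - fst s) * varY ^ (n - k - snd s) = varX ^ (k - fst t) * varY ^ (n - k - snd t)"
      using CC_nz by (simp add: Wf_def)
    show "s = t"
    proof (rule ccontr)
      assume ne: "s \<noteq> t"
      define d where "d u = (if u = s then 1 else if u = t then -1 else 0 :: int)" for u
      have "(\<Sum>u\<in>D'. of_int (d u) * (varX ^ (k - fst u) * varY ^ (n - k - snd u)))
          = (\<Sum>u\<in>{s, t}. of_int (d u) * (varX ^ (k - fst u) * varY ^ (n - k - snd u)))"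
        using st by (intro sum.mono_neutral_right) (auto simp: D'_def d_def)
      also have "\<dots> = 0" using ne m by (simp add: d_def)
      finally have "d s = 0" using key st(1) by blast
      then show False by (simp add: d_def)
    qed
  qed
  define Wit where "Wit = insert W0 (Wf ` D')"
  have finD: "finite D'" by (simp add: D'_def)
  have cardW: "card Wit = k * (n - k) + 1"
    unfolding Wit_def using W0n finD inj
    by (simp add: card_image D'_def card_cartesian_product)
  have subW: "Wit \<subseteq> zspan S" unfolding Wit_def using W0S WfS by auto
  have indW: "zindep Wit"
    unfolding zindep_def
  proof (intro conjI allI impI)
    show "finite Wit" using finD by (simp add: Wit_def)
  next
    fix c :: "int poly poly \<Rightarrow> int"
    assume s0: "(\<Sum>p\<in>Wit. of_int (c p) * p) = 0"
    have split: "(\<Sum>p\<in>Wit. of_int (c p) * p) = of_int (c W0) * W0 + (\<Sum>t\<in>D'. of_int (c (Wf t)) * Wf t)"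
      unfolding Wit_def using W0n finD inj by (simp add: sum.reindex)
    have "ev (\<Sum>p\<in>Wit. of_int (c p) * p) = c W0 * 2 ^ n"
      unfolding split by (simp add: evW0 evWf)
    then have cW0: "c W0 = 0" using s0 by simp
    have "(\<Sum>t\<in>D'. of_int (c (Wf t)) * Wf t) = CC * (\<Sum>t\<in>D'. of_int (c (Wf t)) * (varX ^ (k - fst t) * varY ^ (n - k - snd t)))"
      unfolding sum_distrib_left by (rule sum.cong) (simp_all add: Wf_def mult.left_commute)
    moreover have "(\<Sum>t\<in>D'. of_int (c (Wf t)) * Wf t) = 0" using s0 split cW0 by simp
    ultimately have "CC * (\<Sum>t\<in>D'. of_int (c (Wf t)) * (varX ^ (k - fst t) * varY ^ (n - k - snd t))) = 0"
      by simp
    then have z: "(\<Sum>t\<in>D'. of_int (c (Wf t)) * (varX ^ (k - fst t) * varY ^ (n - k - snd t))) = 0"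
      using CC_nz by simp
    show "\<forall>p\<in>Wit. c p = 0"
    proof
      fix p assume "p \<in> Wit"
      then consider "p = W0" | t where "t \<in> D'" "p = Wf t" unfolding Wit_def by auto
      then show "c p = 0"
      proof cases
        case 1 then show ?thesis using cW0 by simp
      next
        case 2 then show ?thesis using key[of "\<lambda>t. c (Wf t)", OF z] by simp
      qed
    qed
  qed
  show ?thesis using subW indW cardW by (intro exI[of _ Wit]) simp
qed

lemma rk_full: "a \<le> k \<Longrightarrow> k \<le> n \<Longrightarrow> rk k a b {..<n} = k"
proof -
  assume "a \<le> k" "k \<le> n"
  then have "\<not> dl k a b {..<n}" "{..<n} \<inter> {..<k} = {..<k}" by (auto simp: dl_def)
  then show ?thesis by (simp add: rk_def)
qed

lemma bin_in:
  assumes "a \<le> k" "b \<le> n - k" "k \<le> n"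
  shows "varX ^ k * varY ^ (n - k) + (1 - Xm * Ym) * Fa k a * Gb n k b \<in> binary_tutte_polys n k"
proof -
  have ak: "a \<le> k" and kb: "k + b \<le> n" using assms by auto
  let ?I = "bin_indep (vb k a b)"
  have R: "mrank ?I A = rk k a b A" if "A \<subseteq> {..<n}" for A
    by (rule mrank_char[OF ak kb _ that]) (rule bin_char[OF ak kb])
  have "mrank ?I {..<n} = k" using R[of "{..<n}"] rk_full[OF ak assms(3)] by simp
  moreover have "tutte ?I {..<n} = varX ^ k * varY ^ (n - k) + (1 - Xm * Ym) * Fa k a * Gb n k b"
    by (rule tutte_formula[OF ak kb R])
  ultimately show ?thesis unfolding binary_tutte_polys_def by (intro CollectI exI[of _ "vb k a b"]) simp
qed

lemma graph_in:
  assumes "a \<le> k" "b \<le> n - k" "k \<le> n"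
  shows "varX ^ k * varY ^ (n - k) + (1 - Xm * Ym) * Fa k a * Gb n k b \<in> graphic_tutte_polys n k"
proof -
  have ak: "a \<le> k" and kb: "k + b \<le> n" using assms by auto
  let ?I = "graph_indep (gG k a b)"
  have R: "mrank ?I A = rk k a b A" if "A \<subseteq> {..<n}" for A
    by (rule mrank_char[OF ak kb _ that]) (rule graph_char[OF ak kb])
  have "mrank ?I {..<n} = k" using R[of "{..<n}"] rk_full[OF ak assms(3)] by simp
  moreover have "tutte ?I {..<n} = varX ^ k * varY ^ (n - k) + (1 - Xm * Ym) * Fa k a * Gb n k b"
    by (rule tutte_formula[OF ak kb R])
  ultimately show ?thesis unfolding graphic_tutte_polys_def by (intro CollectI exI[of _ "gG k a b"]) simp
qed

theorem corollary4p14: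
  fixes n k :: nat
  assumes "k \<le> n"
  shows "zrank (zspan (binary_tutte_polys n k)) = k * (n - k) + 1
       \<and> zrank (zspan (graphic_tutte_polys n k)) = k * (n - k) + 1"
proof
  have ub: "\<forall>p\<in>binary_tutte_polys n k. \<exists>I. hered I \<and> mrank I {..<n} = k \<and> p = tutte I {..<n}"
    unfolding binary_tutte_polys_def using hered_bin by blast
  obtain T0 where T0: "T0 \<subseteq> zspan (binary_tutte_polys n k)" "zindep T0" "card T0 = k * (n - k) + 1"
    using lower_bound[OF assms, of "binary_tutte_polys n k"] bin_in assms by blast
  show "zrank (zspan (binary_tutte_polys n k)) = k * (n - k) + 1"
    by (rule zrank_eq[OF _ T0]) (rule upper_bound[OF ub])
next
  have ub: "\<forall>p\<in>graphic_tutte_polys n k. \<exists>I. hered I \<and> mrank I {..<n} = k \<and> p = tutte I {..<n}"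
    unfolding graphic_tutte_polys_def using hered_graph by blast
  obtain T0 where T0: "T0 \<subseteq> zspan (graphic_tutte_polys n k)" "zindep T0" "card T0 = k * (n - k) + 1"
    using lower_bound[OF assms, of "graphic_tutte_polys n k"] graph_in assms by blast
  show "zrank (zspan (graphic_tutte_polys n k)) = k * (n - k) + 1"
    by (rule zrank_eq[OF _ T0]) (rule upper_bound[OF ub])
qed

end
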